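(* Let $G$ be an absolutely continuous distribution function on $[0,\infty)$ with density $g$ and hazard rate $r=g/(1-G)$. Let $\lambda_1,\dots,\lambda_n,\lambda^*_1,\dots,\lambda^*_n>0$, let $X_1,\dots,X_n$ be independent nonnegative random variables with $X_i$ having distribution function $G(\lambda_i x)$, and let $X^*_1,\dots,X^*_n$ be independent nonnegative random variables with $X^*_i$ having distribution function $G(\lambda^*_i x)$. Assume $x r(x)$ is increasing in $x$. (a) If $x^2r'(x)$ is decreasing in $x$ and $\sum_{i=1}^{j}\lambda^*_{(i)}\ge\sum_{i=1}^{j}\lambda_{(i)}$ for all $j=1,\dots,n$, then (i) $X_{1:n}\ge_{\rm hr}X^*_{1:n}$, and (ii) if moreover $r$ is decreasing, $X_{1:n}\ge_{\rm disp}X^*_{1:n}$. (b) If $x^2r'(x)$ is increasing in $x$ and $\sum_{i=j}^{n}\lambda^*_{(i)}\le\sum_{i=j}^{n}\lambda_{(i)}$ for all $j=1,\dots,n$, then (i) $X_{1:n}\le_{\rm hr}X^*_{1:n}$, and (ii) if moreover $r$ is decreasing, $X_{1:n}\le_{\rm disp}X^*_{1:n}$.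
   Context: $X_{1:n}=\min(X_1,\dots,X_n)$. For a vector $\boldsymbol{x}$, $x_{(1)}\le\dots\le x_{(n)}$ are its components in increasing order. For random variables $X,Y$ with distribution functions $F,H$, hazard rates $r_F,r_H$: $X\le_{\rm hr}Y$ means $r_F(x)\ge r_H(x)$ for all $x$; $X\le_{\rm disp}Y$ means $F^{-1}(\beta)-F^{-1}(\alpha)\le H^{-1}(\beta)-H^{-1}(\alpha)$ for all $0<\alpha\le\beta<1$. Increasing/decreasing mean nondecreasing/nonincreasing. *)

theory Defs
  imports "HOL-Probability.Probability"
begin

definition hazard_rate :: "(real \<Rightarrow> real) \<Rightarrow> real \<Rightarrow> real" where
  "hazard_rate F x = deriv F x / (1 - F x)"

definition hr_le :: "real measure \<Rightarrow> real measure \<Rightarrow> bool" where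
  "hr_le D1 D2 \<longleftrightarrow> (\<forall>x>0. hazard_rate (cdf D2) x \<le> hazard_rate (cdf D1) x)"

definition quantile :: "(real \<Rightarrow> real) \<Rightarrow> real \<Rightarrow> real" where
  "quantile F a = Inf {x. a \<le> F x}"

definition disp_le :: "real measure \<Rightarrow> real measure \<Rightarrow> bool" where
  "disp_le D1 D2 \<longleftrightarrow> (\<forall>a b. 0 < a \<longrightarrow> a \<le> b \<longrightarrow> b < 1 \<longrightarrow>
      quantile (cdf D1) b - quantile (cdf D1) a \<le> quantile (cdf D2) b - quantile (cdf D2) a)"

definition sorted_vals :: "nat \<Rightarrow> (nat \<Rightarrow> real) \<Rightarrow> real list" where
  "sorted_vals n l = sort (map l [0..<n])"

definition min_rv :: "nat \<Rightarrow> (nat \<Rightarrow> 'a \<Rightarrow> real) \<Rightarrow> 'a \<Rightarrow> real" where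
  "min_rv n X = (\<lambda>\<omega>. Min ((\<lambda>i. X i \<omega>) ` {..<n}))"

end

theory Submission
  imports Defs
begin


locale Gsetup =
  fixes g G r r' :: "real \<Rightarrow> real"
  assumes g_meas: "g \<in> borel_measurable borel"
    and g_nonneg: "\<forall>x. 0 \<le> g x"
    and g_zero: "\<forall>x<0. g x = 0"
    and g_int: "integrable lborel g"
    and G_def: "\<forall>x. G x = (LINT t:{..x}|lborel. g t)"
    and r_def: "\<forall>x\<ge>0. r x = g x / (1 - G x)"
    and r_deriv: "\<forall>x>0. (r has_real_derivative r' x) (at x)"
    and xr_incr: "mono_on {0<..} (\<lambda>x. x * r x)"
    and G_le1: "\<forall>x. G x \<le> 1"
    and G_lim: "(G \<longlongrightarrow> 1) at_top"
begin

lemma G_integral: assumes "c \<le> 0" "c \<le> x" shows "G x = integral {c..x} g"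
proof -
  have si: "set_integrable lborel {c..x} g"
    unfolding set_integrable_def by (rule integrable_mult_indicator) (auto simp: g_int)
  have "G x = (LINT t:{..x}|lborel. g t)" using G_def by simp
  also have "\<dots> = (LINT t:{c..x}|lborel. g t)"
    unfolding set_lebesgue_integral_def
    by (rule Bochner_Integration.integral_cong) (use g_zero assms in \<open>auto simp: indicator_def\<close>)
  also have "\<dots> = integral {c..x} g" by (rule set_borel_integral_eq_integral(2)[OF si])
  finally show ?thesis .
qed

lemma g_integrable_on: "g integrable_on {c..x}"
proof -
  have si: "set_integrable lborel {c..x} g"
    unfolding set_integrable_def by (rule integrable_mult_indicator) (auto simp: g_int)
  show ?thesis by (rule set_borel_integral_eq_integral(1)[OF si])
qed

lemma G_neg: assumes "x \<le> 0" shows "G x = 0"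
proof -
  have "G x = integral {x-1..x} g" using assms by (intro G_integral) auto
  also have "\<dots> = integral {x-1..x} (\<lambda>_. 0::real)"
    by (rule integral_spike[of "{0}"]) (use g_zero assms in auto)
  finally show ?thesis by simp
qed

lemma G_cont: "isCont G x"
proof -
  define c where "c = min x 0 - 1"
  have "continuous_on {c..x+1} (\<lambda>u. integral {c..u} g)"
    by (rule indefinite_integral_continuous_1[OF g_integrable_on])
  then have "continuous_on {c..x+1} G"
    by (rule continuous_on_eq) (auto simp: c_def intro!: G_integral[symmetric])
  then show ?thesis
    by (rule continuous_on_interior) (auto simp: c_def)
qed


lemma G_nonneg: "0 \<le> G x"
proof (cases "x \<le> 0")
  case True then show ?thesis using G_neg by simp
next
  case False
  then have "G x = integral {0..x} g" by (intro G_integral) auto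
  also have "\<dots> \<ge> 0" by (rule integral_nonneg[OF g_integrable_on]) (use g_nonneg in auto)
  finally show ?thesis by simp
qed

lemma G_lt1: "G x < 1"
proof (rule ccontr)
  assume "\<not> G x < 1"
  then have Gx: "G x = 1" using G_le1 by (meson linorder_not_less order_antisym)
  define S where "S = {y. G y = 1}"
  have cG: "continuous_on UNIV G" using G_cont by (simp add: continuous_at_imp_continuous_on)
  have clS: "closed S" unfolding S_def by (rule closed_Collect_eq[OF cG]) simp
  have Spos: "\<And>y. y \<in> S \<Longrightarrow> y > 0" unfolding S_def using G_neg by (metis mem_Collect_eq not_le zero_neq_one)
  have bS: "bdd_below S" using Spos by (meson bdd_belowI less_le_not_le)
  have neS: "S \<noteq> {}" using Gx S_def by auto
  define ys where "ys = Inf S"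
  have ysS: "ys \<in> S" unfolding ys_def by (rule closed_contains_Inf[OF neS bS clS])
  have ys_pos: "ys > 0" using Spos ysS by simp
  have Gys: "G ys = 1" using ysS S_def by simp
  have rys: "r ys = 0" using r_def ys_pos Gys by simp
  have gz: "g t = 0" if t: "0 < t" "t < ys" for t
  proof -
    have "t \<notin> S" using t cInf_lower[OF _ bS] ys_def by force
    then have Gt: "G t < 1" using G_le1 S_def by (metis less_eq_real_def mem_Collect_eq)
    have "t * r t \<le> ys * r ys" using xr_incr t by (intro mono_onD[OF xr_incr]) auto
    then have "t * r t \<le> 0" using rys by simp
    then have "r t \<le> 0" using t by (simp add: mult_le_0_iff)
    moreover have "r t = g t / (1 - G t)" using r_def t by simp
    ultimately show ?thesis using Gt g_nonneg
      by (metis diff_gt_0_iff_gt divide_le_0_iff order_antisym linorder_not_le)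
  qed
  have "G ys = integral {0..ys} g" using ys_pos by (intro G_integral) auto
  also have "\<dots> = integral {0..ys} (\<lambda>_. 0::real)"
    by (rule integral_spike[of "{0, ys}"]) (use gz in auto)
  finally show False using Gys by simp
qed

lemma g_eq: "x \<ge> 0 \<Longrightarrow> g x = r x * (1 - G x)"
  using r_def G_lt1[of x] by auto

lemma G_deriv: assumes "y > 0" shows "(G has_real_derivative g y) (at y)"
proof -
  have rc: "isCont r y" using r_deriv assms DERIV_isCont by blast
  have c1: "isCont (\<lambda>t. r t * (1 - G t)) y" using rc G_cont by (intro continuous_intros) auto
  have ev: "\<forall>\<^sub>F t in nhds y. r t * (1 - G t) = g t"
  proof -
    have "\<forall>\<^sub>F t in nhds y. t \<in> {0<..}" using assms by (intro eventually_nhds_in_open) auto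
    then show ?thesis by eventually_elim (simp add: g_eq)
  qed
  have gc: "isCont g y" using isCont_cong[OF ev] c1 g_eq[of y] assms by simp
  have d: "((\<lambda>u. integral {-1..u} g) has_vector_derivative g y) (at y within {-1..y+1} - {})"
  proof (rule integral_has_vector_derivative_continuous_at[OF g_integrable_on])
    show "y \<in> {-1..y+1} - {}" using assms by simp
    show "continuous (at y within {-1..y+1} - {}) g" using gc by (rule continuous_at_imp_continuous_within)
  qed simp
  have "((\<lambda>u. integral {-1..u} g) has_real_derivative g y) (at y)"
  proof -
    have "y \<in> interior {-1..y+1}" using assms by simp
    then have "at y within {-1..y+1} = at y" by (rule at_within_interior)
    then show ?thesis using d by (simp add: has_real_derivative_iff_has_vector_derivative)
  qed
  then show ?thesis
  proof (rule has_field_derivative_transform_within_open[of _ _ _ "{-1<..<y+1}"])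
    show "open {-1<..<y+1::real}" by simp
    show "y \<in> {-1<..<y+1}" using assms by simp
    show "\<And>x. x \<in> {-1<..<y+1} \<Longrightarrow> integral {-1..x} g = G x" using G_integral[of "-1"] by simp
  qed
qed


definition LG :: "real \<Rightarrow> real" where "LG y = - ln (1 - G y)"

lemma LG_cont: "isCont LG x"
  unfolding LG_def using G_cont[of x] G_lt1[of x] by (intro continuous_intros) auto

lemma LG_neg: "x \<le> 0 \<Longrightarrow> LG x = 0"
  unfolding LG_def using G_neg by simp

lemma LG_nonneg: "0 \<le> LG x"
  unfolding LG_def using G_nonneg[of x] G_lt1[of x] by simp

lemma exp_LG: "exp (- LG x) = 1 - G x"
  unfolding LG_def using G_lt1[of x] by simp

lemma LG_deriv: assumes "y > 0" shows "(LG has_real_derivative r y) (at y)"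
proof -
  have d1: "((\<lambda>t. 1 - G t) has_real_derivative (0 - g y)) (at y)"
    by (intro derivative_intros G_deriv[OF assms])
  have "((\<lambda>t. - ln (1 - G t)) has_real_derivative - (inverse (1 - G y) * (0 - g y))) (at y)"
    using G_lt1[of y] by (intro DERIV_minus DERIV_chain2[OF DERIV_ln d1]) auto
  moreover have "- (inverse (1 - G y) * (0 - g y)) = r y"
    using r_def assms G_lt1[of y] by (simp add: field_simps)
  ultimately show ?thesis unfolding LG_def[abs_def] by simp
qed

lemma LG_unb: "\<exists>y. s \<le> LG y"
proof -
  have "\<forall>\<^sub>F y in at_top. 1 - exp (- s) < G y"
    using G_lim by (rule order_tendstoD) simp
  then obtain y where y: "1 - exp (- s) < G y" by (meson eventually_happens' trivial_limit_at_top_linorder)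
  then have "1 - G y < exp (- s)" by simp
  then have "ln (1 - G y) < - s" using G_lt1[of y] by (metis diff_gt_0_iff_gt ln_exp ln_less_cancel_iff exp_gt_zero)
  then show ?thesis unfolding LG_def by (intro exI[of _ y]) simp
qed

definition Lam :: "nat \<Rightarrow> (nat \<Rightarrow> real) \<Rightarrow> real \<Rightarrow> real" where
  "Lam n l x = (\<Sum>i<n. LG (l i * x))"

definition Haz :: "nat \<Rightarrow> (nat \<Rightarrow> real) \<Rightarrow> real \<Rightarrow> real" where
  "Haz n l x = (\<Sum>i<n. l i * r (l i * x))"

lemma Lam_cont: "continuous_on UNIV (Lam n l)"
proof -
  have "isCont (Lam n l) x" for x
    unfolding Lam_def[abs_def]
    by (intro continuous_intros continuous_at_compose[OF _ LG_cont, unfolded o_def]) 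
  then show ?thesis by (simp add: continuous_at_imp_continuous_on)
qed

lemma Lam_neg: "\<forall>i<n. 0 < l i \<Longrightarrow> x \<le> 0 \<Longrightarrow> Lam n l x = 0"
  unfolding Lam_def by (intro sum.neutral) (auto intro!: LG_neg simp: mult_nonneg_nonpos)

lemma Lam_deriv: assumes "\<forall>i<n. 0 < l i" "x > 0"
  shows "(Lam n l has_real_derivative Haz n l x) (at x)"
proof -
  have "((\<lambda>x. \<Sum>i<n. LG (l i * x)) has_real_derivative (\<Sum>i<n. r (l i * x) * (l i))) (at x)"
  proof (intro DERIV_sum)
    fix i assume "i \<in> {..<n}"
    then have "l i * x > 0" using assms by simp
    then show "((\<lambda>x. LG (l i * x)) has_real_derivative r (l i * x) * l i) (at x)"
      by (intro DERIV_chain2[OF LG_deriv] derivative_eq_intros) auto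
  qed
  then show ?thesis unfolding Lam_def[abs_def] Haz_def by (simp add: mult.commute)
qed

lemma Lam_unb: assumes "\<forall>i<n. 0 < l i" "n \<ge> 1" shows "\<exists>x. s \<le> Lam n l x"
proof -
  obtain y where y: "s \<le> LG y" using LG_unb by blast
  define x where "x = y / l 0"
  have l0: "l 0 > 0" using assms by auto
  have "s \<le> LG (l 0 * x)" using y l0 by (simp add: x_def)
  also have "\<dots> \<le> Lam n l x" unfolding Lam_def
    by (rule member_le_sum) (use assms LG_nonneg in auto)
  finally show ?thesis by blast
qed


definition hh :: "real \<Rightarrow> real" where "hh u = u * r u"
definition hh' :: "real \<Rightarrow> real" where "hh' u = r u + u * r' u"

lemma hh_deriv: "\<forall>u>0. (hh has_real_derivative hh' u) (at u)"
proof (intro allI impI)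
  fix u :: real assume u: "u > 0"
  show "(hh has_real_derivative hh' u) (at u)"
    unfolding hh_def[abs_def] hh'_def
    using r_deriv u by (auto intro!: derivative_eq_intros)
qed

lemma hh'_nonneg: "\<forall>u>0. 0 \<le> hh' u"
proof (intro allI impI)
  fix u :: real assume u: "u > 0"
  show "0 \<le> hh' u"
  proof (rule ccontr)
    assume "\<not> 0 \<le> hh' u"
    then have "hh' u < 0" by simp
    from DERIV_neg_dec_right[OF hh_deriv[rule_format, OF u] this]
    obtain e where e: "e > 0" "\<forall>h>0. h < e \<longrightarrow> hh (u + h) < hh u" by blast
    have "hh (u + e/2) < hh u" using e by simp
    moreover have "hh u \<le> hh (u + e/2)" unfolding hh_def
      using u e by (intro mono_onD[OF xr_incr]) auto
    ultimately show False by simp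
  qed
qed

lemma hh'_anti: assumes k: "antimono_on {0<..} (\<lambda>x. x\<^sup>2 * r' x)"
  shows "\<forall>u v. 0 < u \<longrightarrow> u \<le> v \<longrightarrow> hh' v \<le> hh' u"
proof (intro allI impI)
  fix u v :: real assume uv: "0 < u" "u \<le> v"
  define K where "K = u\<^sup>2 * r' u"
  define psi where "psi t = r t + K / t" for t
  have "psi v \<le> psi u"
  proof (rule DERIV_nonpos_imp_nonincreasing[OF uv(2)])
    fix t assume t: "u \<le> t" "t \<le> v"
    then have tp: "t > 0" using uv by simp
    have "(psi has_real_derivative r' t - K / t\<^sup>2) (at t)"
      unfolding psi_def[abs_def] using r_deriv tp
      by (auto intro!: derivative_eq_intros simp: power2_eq_square)
    moreover have "r' t - K / t\<^sup>2 \<le> 0"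
    proof -
      have "t\<^sup>2 * r' t \<le> K" unfolding K_def using t uv by (intro monotone_onD[OF k]) auto
      then have "r' t \<le> K / t\<^sup>2" using tp by (simp add: field_simps)
      then show ?thesis by simp
    qed
    ultimately show "\<exists>y. (psi has_real_derivative y) (at t) \<and> y \<le> 0" by blast
  qed
  moreover have "v\<^sup>2 * r' v \<le> K" unfolding K_def using uv by (intro monotone_onD[OF k]) auto
  then have "v * r' v \<le> K / v" using uv by (simp add: field_simps power2_eq_square)
  ultimately have "hh' v \<le> psi u" unfolding hh'_def psi_def by simp
  also have "psi u = hh' u" unfolding psi_def hh'_def K_def using uv by (simp add: power2_eq_square)
  finally show "hh' v \<le> hh' u" .
qed

lemma hh'_mono: assumes k: "mono_on {0<..} (\<lambda>x. x\<^sup>2 * r' x)"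
  shows "\<forall>u v. 0 < u \<longrightarrow> u \<le> v \<longrightarrow> hh' u \<le> hh' v"
proof (intro allI impI)
  fix u v :: real assume uv: "0 < u" "u \<le> v"
  define K where "K = u\<^sup>2 * r' u"
  define psi where "psi t = r t + K / t" for t
  have "psi u \<le> psi v"
  proof (rule DERIV_nonneg_imp_nondecreasing[OF uv(2)])
    fix t assume t: "u \<le> t" "t \<le> v"
    then have tp: "t > 0" using uv by simp
    have "(psi has_real_derivative r' t - K / t\<^sup>2) (at t)"
      unfolding psi_def[abs_def] using r_deriv tp
      by (auto intro!: derivative_eq_intros simp: power2_eq_square)
    moreover have "0 \<le> r' t - K / t\<^sup>2"
    proof -
      have "K \<le> t\<^sup>2 * r' t" unfolding K_def using t uv by (intro mono_onD[OF k]) auto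
      then have "K / t\<^sup>2 \<le> r' t" using tp by (simp add: field_simps)
      then show ?thesis by simp
    qed
    ultimately show "\<exists>y. (psi has_real_derivative y) (at t) \<and> 0 \<le> y" by blast
  qed
  moreover have "K \<le> v\<^sup>2 * r' v" unfolding K_def using uv by (intro mono_onD[OF k]) auto
  then have "K / v \<le> v * r' v" using uv by (simp add: field_simps power2_eq_square)
  ultimately have "psi u \<le> hh' v" unfolding hh'_def psi_def by simp
  moreover have "psi u = hh' u" unfolding psi_def hh'_def K_def using uv by (simp add: power2_eq_square)
  ultimately show "hh' u \<le> hh' v" by simp
qed

lemma Haz_hh: "x > 0 \<Longrightarrow> Haz n l x = (\<Sum>i<n. hh (l i * x)) / x"
  unfolding Haz_def hh_def by (simp add: sum_divide_distrib)

lemma Haz_anti: assumes "\<forall>i<n. 0 < l i" "antimono_on {0<..} r" "0 < x" "x \<le> y"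
  shows "Haz n l y \<le> Haz n l x"
  unfolding Haz_def
proof (rule sum_mono)
  fix i assume "i \<in> {..<n}"
  then have li: "l i > 0" using assms by auto
  then have "r (l i * y) \<le> r (l i * x)" using assms
    by (intro monotone_onD[OF assms(2)]) auto
  then show "l i * r (l i * y) \<le> l i * r (l i * x)" using li by simp
qed


end

lemma Q_prop:
  fixes L :: "real \<Rightarrow> real"
  assumes cL: "continuous_on UNIV L" and L0: "\<forall>x\<le>0. L x = 0" and unb: "\<forall>s. \<exists>x. s \<le> L x"
    and s: "s > 0"
  shows "L (Inf {x. s \<le> L x}) = s" "Inf {x. s \<le> L x} > 0" "\<And>x. s \<le> L x \<Longrightarrow> Inf {x. s \<le> L x} \<le> x"
proof -
  define S where "S = {x. s \<le> L x}"
  have clS: "closed S" unfolding S_def by (rule closed_Collect_le[OF continuous_on_const cL])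
  have Spos: "x > 0" if "x \<in> S" for x using that L0 s unfolding S_def by (metis mem_Collect_eq not_le)
  have bS: "bdd_below S" using Spos by (meson bdd_belowI less_le_not_le)
  have neS: "S \<noteq> {}" using unb S_def by auto
  have QS: "Inf S \<in> S" by (rule closed_contains_Inf[OF neS bS clS])
  show low: "\<And>x. s \<le> L x \<Longrightarrow> Inf {x. s \<le> L x} \<le> x" using bS S_def by (simp add: cInf_lower)
  show "Inf {x. s \<le> L x} > 0" using Spos QS S_def by simp
  then have "0 \<le> Inf S" using S_def by simp
  moreover have "L 0 \<le> s" using L0 s by simp
  moreover have "s \<le> L (Inf S)" using QS S_def by simp
  ultimately obtain y where y: "0 \<le> y" "y \<le> Inf S" "L y = s"
    using IVT'[of L 0 s "Inf S"] continuous_on_subset[OF cL] by blast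
  then have "Inf S \<le> y" using low S_def by simp
  then show "L (Inf {x. s \<le> L x}) = s" using y S_def by simp
qed


lemma disp_generic:
  fixes L1 L2 H1 H2 :: "real \<Rightarrow> real"
  assumes c1: "continuous_on UNIV L1" and z1: "\<forall>x\<le>0. L1 x = 0" and u1: "\<forall>s. \<exists>x. s \<le> L1 x"
    and c2: "continuous_on UNIV L2" and z2: "\<forall>x\<le>0. L2 x = 0" and u2: "\<forall>s. \<exists>x. s \<le> L2 x"
    and d1: "\<forall>x>0. (L1 has_real_derivative H1 x) (at x)"
    and d2: "\<forall>x>0. (L2 has_real_derivative H2 x) (at x)"
    and le: "\<forall>x>0. H2 x \<le> H1 x"
    and anti: "\<forall>x y. 0 < x \<longrightarrow> x \<le> y \<longrightarrow> H1 y \<le> H1 x"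
    and st: "0 < s" "s \<le> t"
  shows "Inf {x. t \<le> L1 x} - Inf {x. s \<le> L1 x} \<le> Inf {x. t \<le> L2 x} - Inf {x. s \<le> L2 x}"
proof -
  define p where "p = Inf {x. s \<le> L1 x}"
  define q where "q = Inf {x. t \<le> L1 x}"
  define p' where "p' = Inf {x. s \<le> L2 x}"
  define q' where "q' = Inf {x. t \<le> L2 x}"
  have t: "t > 0" using st by simp
  note P1 = Q_prop[OF c1 z1 u1 st(1), folded p_def]
  note P2 = Q_prop[OF c2 z2 u2 st(1), folded p'_def]
  note T1 = Q_prop[OF c1 z1 u1 t, folded q_def]
  note T2 = Q_prop[OF c2 z2 u2 t, folded q'_def]
  have L12: "L2 x \<le> L1 x" if "0 \<le> x" for x
  proof -
    have "(\<lambda>x. L1 x - L2 x) 0 \<le> (\<lambda>x. L1 x - L2 x) x"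
    proof (rule DERIV_nonneg_imp_increasing_open[OF that])
      fix y assume "0 < y" "y < x"
      then show "\<exists>d. ((\<lambda>x. L1 x - L2 x) has_real_derivative d) (at y) \<and> 0 \<le> d"
      proof (intro exI conjI)
        show "((\<lambda>x. L1 x - L2 x) has_real_derivative H1 y - H2 y) (at y)"
          using d1 d2 \<open>0 < y\<close> by (intro DERIV_diff) auto
        show "0 \<le> H1 y - H2 y" using le \<open>0 < y\<close> by simp
      qed
    next
      show "continuous_on {0..x} (\<lambda>x. L1 x - L2 x)"
        by (rule continuous_on_diff[OF continuous_on_subset[OF c1] continuous_on_subset[OF c2]]) auto
    qed
    then show ?thesis using z1 z2 by simp
  qed
  have pp': "p \<le> p'" using P1(3) L12[of p'] P2(1) P2(2) by simp
  have pq': "p' \<le> q'" using P2(3) T2(1) st by simp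
  define E where "E u = L1 (p + u) - L2 (p' + u)" for u
  have "E 0 \<le> E (q' - p')"
  proof (rule DERIV_nonneg_imp_increasing_open[of 0 "q' - p'" E])
    show "0 \<le> q' - p'" using pq' by simp
  next
    fix u assume u: "0 < u" "u < q' - p'"
    have pos: "0 < p + u" "0 < p' + u" using P1(2) P2(2) u by auto
    have "(E has_real_derivative (H1 (p + u) * 1 - H2 (p' + u) * 1)) (at u)"
    proof -
      have e1: "((\<lambda>u. L1 (p + u)) has_real_derivative H1 (p + u) * 1) (at u)"
        by (rule DERIV_chain2[of L1]) (use d1 pos in \<open>auto intro!: derivative_eq_intros\<close>)
      have e2: "((\<lambda>u. L2 (p' + u)) has_real_derivative H2 (p' + u) * 1) (at u)"
        by (rule DERIV_chain2[of L2]) (use d2 pos in \<open>auto intro!: derivative_eq_intros\<close>)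
      show ?thesis unfolding E_def[abs_def] by (rule DERIV_diff[OF e1 e2])
    qed
    moreover have "H2 (p' + u) \<le> H1 (p + u)"
    proof -
      have "H1 (p' + u) \<le> H1 (p + u)" using anti pos pp' by simp
      moreover have "H2 (p' + u) \<le> H1 (p' + u)" using le pos by simp
      ultimately show ?thesis by linarith
    qed
    ultimately show "\<exists>y. (E has_real_derivative y) (at u) \<and> 0 \<le> y" by auto
  next
    have a1: "continuous_on {0..q' - p'} (\<lambda>u. L1 (p + u))"
      by (rule continuous_on_compose2[OF c1]) (auto intro!: continuous_intros)
    have a2: "continuous_on {0..q' - p'} (\<lambda>u. L2 (p' + u))"
      by (rule continuous_on_compose2[OF c2]) (auto intro!: continuous_intros)
    show "continuous_on {0..q' - p'} E" unfolding E_def[abs_def]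
      by (rule continuous_on_diff[OF a1 a2])
  qed
  then have "t \<le> L1 (p + (q' - p'))" using P1(1) P2(1) T2(1) by (simp add: E_def)
  then have "q \<le> p + (q' - p')" using T1(3) by simp
  then show ?thesis unfolding p_def[symmetric] q_def[symmetric] p'_def[symmetric] q'_def[symmetric] by simp
qed



lemma tangent_concave:
  fixes h h' :: "real \<Rightarrow> real"
  assumes d: "\<forall>u>0. (h has_real_derivative h' u) (at u)"
    and anti: "\<forall>u v. 0 < u \<longrightarrow> u \<le> v \<longrightarrow> h' v \<le> h' u"
    and a: "0 < a" and b: "0 < b"
  shows "h' b * (b - a) \<le> h b - h a"
proof (cases a b rule: linorder_cases)
  case less
  obtain z where z: "a < z" "z < b" "h b - h a = (b - a) * h' z"
    using MVT2[OF less, of h h'] d a by force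
  have "h' b \<le> h' z" using anti z a by simp
  then show ?thesis using z less by (simp add: mult.commute mult_right_mono)
next
  case equal then show ?thesis by simp
next
  case greater
  obtain z where z: "b < z" "z < a" "h a - h b = (a - b) * h' z"
    using MVT2[OF greater, of h h'] d b by force
  have "h' z \<le> h' b" using anti z b by simp
  then have "(a - b) * h' z \<le> (a - b) * h' b" using greater by (simp add: mult_left_mono)
  then show ?thesis using z by (simp add: algebra_simps)
qed

lemma tangent_convex:
  fixes h h' :: "real \<Rightarrow> real"
  assumes d: "\<forall>u>0. (h has_real_derivative h' u) (at u)"
    and mo: "\<forall>u v. 0 < u \<longrightarrow> u \<le> v \<longrightarrow> h' u \<le> h' v"
    and a: "0 < a" and b: "0 < b"
  shows "h' b * (a - b) \<le> h a - h b"
proof (cases a b rule: linorder_cases)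
  case less
  obtain z where z: "a < z" "z < b" "h b - h a = (b - a) * h' z"
    using MVT2[OF less, of h h'] d a by force
  have "h' z \<le> h' b" using mo z a by simp
  then have "(b - a) * h' z \<le> (b - a) * h' b" using less by (simp add: mult_left_mono)
  then show ?thesis using z by (simp add: algebra_simps)
next
  case equal then show ?thesis by simp
next
  case greater
  obtain z where z: "b < z" "z < a" "h a - h b = (a - b) * h' z"
    using MVT2[OF greater, of h h'] d b by force
  have "h' b \<le> h' z" using mo z b by simp
  then show ?thesis using z greater by (simp add: mult.commute mult_right_mono)
qed

lemma abel_prefix:
  fixes c d :: "nat \<Rightarrow> real"
  assumes c0: "\<forall>i<n. 0 \<le> c i" and cm: "\<forall>i j. i \<le> j \<longrightarrow> j < n \<longrightarrow> c j \<le> c i"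
    and D: "\<forall>j\<le>n. 0 \<le> (\<Sum>i<j. d i)"
  shows "0 \<le> (\<Sum>i<n. c i * d i)"
proof -
  have "\<forall>K. 0 \<le> K \<longrightarrow> (\<forall>i<m. K \<le> c i) \<longrightarrow> K * (\<Sum>i<m. d i) \<le> (\<Sum>i<m. c i * d i)" if "m \<le> n" for m
    using that
  proof (induction m)
    case 0 then show ?case by simp
  next
    case (Suc m)
    show ?case
    proof (intro allI impI)
      fix K :: real assume K: "0 \<le> K" "\<forall>i<Suc m. K \<le> c i"
      have cm0: "0 \<le> c m" using c0 Suc by simp
      have IH: "c m * (\<Sum>i<m. d i) \<le> (\<Sum>i<m. c i * d i)"
        using Suc cm cm0 by simp
      have "K * (\<Sum>i<Suc m. d i) \<le> c m * (\<Sum>i<Suc m. d i)"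
        using K D Suc.prems by (intro mult_right_mono) auto
      also have "\<dots> = c m * (\<Sum>i<m. d i) + c m * d m" by (simp add: algebra_simps)
      also have "\<dots> \<le> (\<Sum>i<Suc m. c i * d i)" using IH by simp
      finally show "K * (\<Sum>i<Suc m. d i) \<le> (\<Sum>i<Suc m. c i * d i)" .
    qed
  qed
  from this[of n] show ?thesis using c0 by (metis order_refl mult_zero_left)
qed

lemma abel_suffix:
  fixes c d :: "nat \<Rightarrow> real"
  assumes c0: "\<forall>i<n. 0 \<le> c i" and cm: "\<forall>i j. i \<le> j \<longrightarrow> j < n \<longrightarrow> c i \<le> c j"
    and E: "\<forall>j<n. 0 \<le> (\<Sum>i\<in>{j..<n}. d i)"
  shows "0 \<le> (\<Sum>i<n. c i * d i)"
proof -
  have "\<forall>K. 0 \<le> K \<longrightarrow> (\<forall>i. n - m \<le> i \<longrightarrow> i < n \<longrightarrow> K \<le> c i) \<longrightarrow>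
          K * (\<Sum>i\<in>{n-m..<n}. d i) \<le> (\<Sum>i\<in>{n-m..<n}. c i * d i)" if "m \<le> n" for m
    using that
  proof (induction m)
    case 0 then show ?case by simp
  next
    case (Suc m)
    define k where "k = n - Suc m"
    have kn: "k < n" "Suc k = n - m" using Suc.prems by (auto simp: k_def)
    show ?case
    proof (intro allI impI)
      fix K :: real assume K: "0 \<le> K" "\<forall>i. n - Suc m \<le> i \<longrightarrow> i < n \<longrightarrow> K \<le> c i"
      have ck0: "0 \<le> c k" using c0 kn by simp
      have IH: "c k * (\<Sum>i\<in>{Suc k..<n}. d i) \<le> (\<Sum>i\<in>{Suc k..<n}. c i * d i)"
        using Suc.IH Suc.prems cm ck0 kn by simp
      have sd: "(\<Sum>i\<in>{k..<n}. d i) = d k + (\<Sum>i\<in>{Suc k..<n}. d i)"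
        using kn by (simp add: sum.atLeast_Suc_lessThan)
      have scd: "(\<Sum>i\<in>{k..<n}. c i * d i) = c k * d k + (\<Sum>i\<in>{Suc k..<n}. c i * d i)"
        using kn by (simp add: sum.atLeast_Suc_lessThan)
      have "K * (\<Sum>i\<in>{k..<n}. d i) \<le> c k * (\<Sum>i\<in>{k..<n}. d i)"
        using K E kn by (intro mult_right_mono) (auto simp: k_def)
      also have "\<dots> \<le> (\<Sum>i\<in>{k..<n}. c i * d i)" using IH sd scd by (simp add: algebra_simps)
      finally show "K * (\<Sum>i\<in>{n - Suc m..<n}. d i) \<le> (\<Sum>i\<in>{n - Suc m..<n}. c i * d i)"
        by (simp add: k_def)
    qed
  qed
  from this[of n] show ?thesis using c0 by (metis order_refl mult_zero_left atLeast0LessThan diff_self_eq_0)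
qed

lemma major_concave:
  fixes a b :: "nat \<Rightarrow> real" and h h' :: "real \<Rightarrow> real"
  assumes pos: "\<forall>i<n. 0 < a i \<and> 0 < b i"
    and bs: "\<forall>i j. i \<le> j \<longrightarrow> j < n \<longrightarrow> b i \<le> b j"
    and pre: "\<forall>j\<le>n. (\<Sum>i<j. a i) \<le> (\<Sum>i<j. b i)"
    and d: "\<forall>u>0. (h has_real_derivative h' u) (at u)"
    and h'0: "\<forall>u>0. 0 \<le> h' u"
    and anti: "\<forall>u v. 0 < u \<longrightarrow> u \<le> v \<longrightarrow> h' v \<le> h' u"
  shows "(\<Sum>i<n. h (a i)) \<le> (\<Sum>i<n. h (b i))"
proof -
  have "0 \<le> (\<Sum>i<n. h' (b i) * (b i - a i))"
  proof (rule abel_prefix)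
    show "\<forall>i<n. 0 \<le> h' (b i)" using h'0 pos by simp
    show "\<forall>i j. i \<le> j \<longrightarrow> j < n \<longrightarrow> h' (b j) \<le> h' (b i)" using anti bs pos by auto
    show "\<forall>j\<le>n. 0 \<le> (\<Sum>i<j. b i - a i)" using pre by (simp add: sum_subtractf)
  qed
  also have "\<dots> \<le> (\<Sum>i<n. h (b i) - h (a i))"
    by (rule sum_mono) (use tangent_concave[OF d anti] pos in auto)
  finally show ?thesis by (simp add: sum_subtractf)
qed

lemma major_convex:
  fixes a b :: "nat \<Rightarrow> real" and h h' :: "real \<Rightarrow> real"
  assumes pos: "\<forall>i<n. 0 < a i \<and> 0 < b i"
    and bs: "\<forall>i j. i \<le> j \<longrightarrow> j < n \<longrightarrow> b i \<le> b j"
    and suf: "\<forall>j<n. (\<Sum>i\<in>{j..<n}. b i) \<le> (\<Sum>i\<in>{j..<n}. a i)"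
    and d: "\<forall>u>0. (h has_real_derivative h' u) (at u)"
    and h'0: "\<forall>u>0. 0 \<le> h' u"
    and mo: "\<forall>u v. 0 < u \<longrightarrow> u \<le> v \<longrightarrow> h' u \<le> h' v"
  shows "(\<Sum>i<n. h (b i)) \<le> (\<Sum>i<n. h (a i))"
proof -
  have "0 \<le> (\<Sum>i<n. h' (b i) * (a i - b i))"
  proof (rule abel_suffix)
    show "\<forall>i<n. 0 \<le> h' (b i)" using h'0 pos by simp
    show "\<forall>i j. i \<le> j \<longrightarrow> j < n \<longrightarrow> h' (b i) \<le> h' (b j)" using mo bs pos by auto
    show "\<forall>j<n. 0 \<le> (\<Sum>i\<in>{j..<n}. a i - b i)" using suf by (simp add: sum_subtractf)
  qed
  also have "\<dots> \<le> (\<Sum>i<n. h (a i) - h (b i))"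
    by (rule sum_mono) (use tangent_convex[OF d mo] pos in auto)
  finally show ?thesis by (simp add: sum_subtractf)
qed



lemma (in prob_space) cdf_min:
  assumes n: "n \<ge> 1" and rv: "\<forall>i<n. X i \<in> borel_measurable M"
    and ind: "indep_vars (\<lambda>_. borel) X {..<n}"
  shows "cdf (distr M borel (min_rv n X)) x = 1 - (\<Prod>i<n. 1 - cdf (distr M borel (X i)) x)"
proof -
  have mrv: "min_rv n X \<in> borel_measurable M"
    unfolding min_rv_def using rv by (intro borel_measurable_Min) auto
  have ne: "{..<n} \<noteq> {}" using n by (simp add: lessThan_empty_iff)
  define A where "A i = X i -` {x<..} \<inter> space M" for i
  have Aev: "A i \<in> events" if "i < n" for i
    unfolding A_def using rv that by (auto intro: measurable_sets)
  have set_eq: "min_rv n X -` {..x} \<inter> space M = space M - (\<Inter>i\<in>{..<n}. A i)"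
  proof -
    have "Min ((\<lambda>i. X i \<omega>) ` {..<n}) \<le> x \<longleftrightarrow> (\<exists>i<n. X i \<omega> \<le> x)" for \<omega>
      using ne by (subst Min_le_iff) auto
    then show ?thesis unfolding A_def min_rv_def using ne by (auto simp: not_less; meson lessThan_iff not_less)
  qed
  have "cdf (distr M borel (min_rv n X)) x = prob (min_rv n X -` {..x} \<inter> space M)"
    unfolding cdf_def2 using mrv by (simp add: measure_distr)
  also have "\<dots> = 1 - prob (\<Inter>i\<in>{..<n}. A i)"
    unfolding set_eq using Aev ne by (intro prob_compl) auto
  also have "prob (\<Inter>i\<in>{..<n}. A i) = (\<Prod>i<n. prob (A i))"
  proof (rule indep_setsD)
    show "indep_sets (\<lambda>i. { X i -` A \<inter> space M | A. A \<in> sets borel}) {..<n}"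
      using ind unfolding indep_vars_def2 by simp
    show "\<forall>j\<in>{..<n}. A j \<in> {X j -` A \<inter> space M |A. A \<in> sets borel}"
      unfolding A_def by (intro ballI CollectI exI[of _ "{x<..}"]) auto
  qed (use ne in auto)
  also have "(\<Prod>i<n. prob (A i)) = (\<Prod>i<n. 1 - cdf (distr M borel (X i)) x)"
  proof (rule prod.cong[OF refl])
    fix i assume i: "i \<in> {..<n}"
    have "A i = space M - (X i -` {..x} \<inter> space M)" unfolding A_def by auto
    then have "prob (A i) = 1 - prob (X i -` {..x} \<inter> space M)"
      using rv i by (simp add: prob_compl[OF measurable_sets[of _ M borel]])
    also have "prob (X i -` {..x} \<inter> space M) = cdf (distr M borel (X i)) x"
      unfolding cdf_def2 using rv i by (simp add: measure_distr)
    finally show "prob (A i) = 1 - cdf (distr M borel (X i)) x" .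
  qed
  finally show ?thesis .
qed



lemma sv_len: "length (sorted_vals n l) = n"
  unfolding sorted_vals_def by simp

lemma sv_sorted: "i \<le> j \<Longrightarrow> j < n \<Longrightarrow> sorted_vals n l ! i \<le> sorted_vals n l ! j"
  unfolding sorted_vals_def by (rule sorted_nth_mono) auto

lemma sv_mem: "i < n \<Longrightarrow> sorted_vals n l ! i \<in> l ` {..<n}"
proof -
  assume i: "i < n"
  have "sorted_vals n l ! i \<in> set (sorted_vals n l)" using i sv_len[of n l] by simp
  then show ?thesis unfolding sorted_vals_def by auto
qed

lemma sv_sum: "(\<Sum>i<n. f (l i)) = (\<Sum>i<n. f (sorted_vals n l ! i) :: real)"
proof -
  have "(\<Sum>i<n. f (l i)) = sum_list (map f (map l [0..<n]))"
    by (simp add: sum_list_distinct_conv_sum_set atLeast0LessThan image_comp)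
  also have "\<dots> = sum_mset (image_mset f (mset (map l [0..<n])))"
    by (simp flip: sum_mset_sum_list add: image_mset.compositionality)
  also have "\<dots> = sum_mset (image_mset f (mset (sorted_vals n l)))"
    unfolding sorted_vals_def by simp
  also have "\<dots> = sum_list (map f (sorted_vals n l))"
    by (simp flip: sum_mset_sum_list)
  also have "\<dots> = (\<Sum>i<n. f (sorted_vals n l ! i))"
    by (simp add: sum_list_sum_nth sv_len atLeast0LessThan)
  finally show ?thesis .
qed

lemma sv_take: "j \<le> n \<Longrightarrow> sum_list (take j (sorted_vals n l)) = (\<Sum>i<j. sorted_vals n l ! i)"
  by (simp add: sum_list_sum_nth sv_len atLeast0LessThan min_def)

lemma sv_drop: "k \<le> n \<Longrightarrow> sum_list (drop k (sorted_vals n l)) = (\<Sum>i\<in>{k..<n}. sorted_vals n l ! i)"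
proof -
  assume k: "k \<le> n"
  have "sum_list (sorted_vals n l) = sum_list (take k (sorted_vals n l)) + sum_list (drop k (sorted_vals n l))"
    by (simp flip: sum_list_append)
  moreover have "sum_list (sorted_vals n l) = (\<Sum>i<n. sorted_vals n l ! i)"
    using sv_take[of n n l] by (simp add: sv_len)
  moreover have "(\<Sum>i<n. sorted_vals n l ! i) = (\<Sum>i<k. sorted_vals n l ! i) + (\<Sum>i\<in>{k..<n}. sorted_vals n l ! i)"
    using k by (metis atLeast0LessThan sum.atLeastLessThan_concat zero_le)
  ultimately show ?thesis using sv_take[OF k, of l] by simp
qed

context Gsetup begin

lemma hazard_Lam: assumes "\<forall>i<n. 0 < l i" "x > 0"
  shows "hazard_rate (\<lambda>x. 1 - exp (- Lam n l x)) x = Haz n l x"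
proof -
  have "((\<lambda>x. 1 - exp (- Lam n l x)) has_real_derivative (0 - exp (- Lam n l x) * (- Haz n l x))) (at x)"
    by (intro derivative_intros DERIV_chain2[OF DERIV_exp] Lam_deriv[OF assms])
  then have "deriv (\<lambda>x. 1 - exp (- Lam n l x)) x = exp (- Lam n l x) * Haz n l x"
    by (simp add: DERIV_imp_deriv)
  then show ?thesis unfolding hazard_rate_def by simp
qed

lemma quantile_Lam: assumes "0 < a" "a < 1"
  shows "quantile (\<lambda>x. 1 - exp (- Lam n l x)) a = Inf {x. - ln (1 - a) \<le> Lam n l x}"
proof -
  have "a \<le> 1 - exp (- Lam n l x) \<longleftrightarrow> - ln (1 - a) \<le> Lam n l x" for x
  proof -
    have "a \<le> 1 - exp (- Lam n l x) \<longleftrightarrow> exp (- Lam n l x) \<le> 1 - a" by linarith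
    also have "\<dots> \<longleftrightarrow> - Lam n l x \<le> ln (1 - a)" using assms
      by (metis diff_gt_0_iff_gt exp_le_cancel_iff exp_ln)
    finally show ?thesis by linarith
  qed
  then show ?thesis unfolding quantile_def by simp
qed

lemma disp_from_haz:
  assumes n: "n \<ge> 1" and p1: "\<forall>i<n. 0 < l1 i" and p2: "\<forall>i<n. 0 < l2 i"
    and le: "\<forall>x>0. Haz n l2 x \<le> Haz n l1 x" and ar: "antimono_on {0<..} r"
    and ab: "0 < a" "a \<le> b" "b < 1"
  shows "quantile (\<lambda>x. 1 - exp (- Lam n l1 x)) b - quantile (\<lambda>x. 1 - exp (- Lam n l1 x)) a
      \<le> quantile (\<lambda>x. 1 - exp (- Lam n l2 x)) b - quantile (\<lambda>x. 1 - exp (- Lam n l2 x)) a"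
proof -
  have a1: "a < 1" "0 < b" using ab by auto
  have s: "0 < - ln (1 - a)" using ab by simp
  have st: "- ln (1 - a) \<le> - ln (1 - b)" using ab by simp
  show ?thesis
    unfolding quantile_Lam[OF ab(1) a1(1)] quantile_Lam[OF a1(2) ab(3)]
  proof (rule disp_generic[OF Lam_cont _ _ Lam_cont _ _ _ _ le _ s st])
    show "\<forall>x\<le>0. Lam n l1 x = 0" "\<forall>x\<le>0. Lam n l2 x = 0" using Lam_neg p1 p2 by auto
    show "\<forall>s. \<exists>x. s \<le> Lam n l1 x" "\<forall>s. \<exists>x. s \<le> Lam n l2 x" using Lam_unb p1 p2 n by auto
    show "\<forall>x>0. (Lam n l1 has_real_derivative Haz n l1 x) (at x)"
      "\<forall>x>0. (Lam n l2 has_real_derivative Haz n l2 x) (at x)" using Lam_deriv p1 p2 by auto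
    show "\<forall>x y. 0 < x \<longrightarrow> x \<le> y \<longrightarrow> Haz n l1 y \<le> Haz n l1 x" using Haz_anti[OF p1 ar] by auto
  qed
qed

end



theorem mainTheorem3:
  fixes G g r r' :: "real \<Rightarrow> real"
    and n :: nat
    and lam lams :: "nat \<Rightarrow> real"
    and M :: "'a measure" and N :: "'b measure"
    and X :: "nat \<Rightarrow> 'a \<Rightarrow> real" and Xs :: "nat \<Rightarrow> 'b \<Rightarrow> real"
  assumes n_pos: "n \<ge> 1"
    and g_meas: "g \<in> borel_measurable borel"
    and g_nonneg: "\<forall>x. 0 \<le> g x"
    and g_zero: "\<forall>x<0. g x = 0"
    and g_int: "integrable lborel g"
    and g_total: "(\<integral>t. g t \<partial>lborel) = 1"
    and G_def: "\<forall>x. G x = (LINT t:{..x}|lborel. g t)"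
    and r_def: "\<forall>x\<ge>0. r x = g x / (1 - G x)"
    and r_deriv: "\<forall>x>0. (r has_real_derivative r' x) (at x)"
    and xr_incr: "mono_on {0<..} (\<lambda>x. x * r x)"
    and lam_pos: "\<forall>i<n. 0 < lam i"
    and lams_pos: "\<forall>i<n. 0 < lams i"
    and M_prob: "prob_space M"
    and N_prob: "prob_space N"
    and X_rv: "\<forall>i<n. X i \<in> borel_measurable M"
    and Xs_rv: "\<forall>i<n. Xs i \<in> borel_measurable N"
    and X_nonneg: "\<forall>i<n. \<forall>\<omega>\<in>space M. 0 \<le> X i \<omega>"
    and Xs_nonneg: "\<forall>i<n. \<forall>\<omega>\<in>space N. 0 \<le> Xs i \<omega>"
    and X_indep: "prob_space.indep_vars M (\<lambda>_. borel) X {..<n}"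
    and Xs_indep: "prob_space.indep_vars N (\<lambda>_. borel) Xs {..<n}"
    and X_distr: "\<forall>i<n. \<forall>x. cdf (distr M borel (X i)) x = G (lam i * x)"
    and Xs_distr: "\<forall>i<n. \<forall>x. cdf (distr N borel (Xs i)) x = G (lams i * x)"
  shows
    "((antimono_on {0<..} (\<lambda>x. x\<^sup>2 * r' x) \<and>
       (\<forall>j\<in>{1..n}. sum_list (take j (sorted_vals n lams)) \<ge> sum_list (take j (sorted_vals n lam))))
      \<longrightarrow> hr_le (distr N borel (min_rv n Xs)) (distr M borel (min_rv n X)) \<and>
          (antimono_on {0<..} r \<longrightarrow>
             disp_le (distr N borel (min_rv n Xs)) (distr M borel (min_rv n X))))
   \<and>
     ((mono_on {0<..} (\<lambda>x. x\<^sup>2 * r' x) \<and>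
       (\<forall>j\<in>{1..n}. sum_list (drop (j - 1) (sorted_vals n lams)) \<le> sum_list (drop (j - 1) (sorted_vals n lam))))
      \<longrightarrow> hr_le (distr M borel (min_rv n X)) (distr N borel (min_rv n Xs)) \<and>
          (antimono_on {0<..} r \<longrightarrow>
             disp_le (distr M borel (min_rv n X)) (distr N borel (min_rv n Xs))))"
proof -
  interpret PM: prob_space M by (rule M_prob)
  interpret PN: prob_space N by (rule N_prob)
  have n0: "0 < n" using n_pos by simp
  have l0: "lam 0 > 0" using lam_pos n0 by simp
  interpret D0: real_distribution "distr M borel (X 0)"
    using X_rv n0 by (intro PM.real_distribution_distr) simp
  have GX: "G = (\<lambda>y. cdf (distr M borel (X 0)) (inverse (lam 0) * y))"
  proof
    fix y show "G y = cdf (distr M borel (X 0)) (inverse (lam 0) * y)"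
      using X_distr n0 l0 by (simp add: mult.assoc[symmetric])
  qed
  have G_le1: "\<forall>x. G x \<le> 1" unfolding GX using D0.cdf_bounded_prob by simp
  have G_lim: "(G \<longlongrightarrow> 1) at_top"
  proof -
    have "filterlim (\<lambda>y. inverse (lam 0) * y) at_top at_top"
      using l0 by (intro filterlim_tendsto_pos_mult_at_top[OF tendsto_const _ filterlim_ident]) simp
    then show ?thesis unfolding GX by (rule filterlim_compose[OF D0.cdf_lim_at_top_prob])
  qed
  interpret Gsetup g G r r'
    by unfold_locales (use g_meas g_nonneg g_zero g_int G_def r_def r_deriv xr_incr G_le1 G_lim in auto)
  have cdfX: "cdf (distr M borel (min_rv n X)) = (\<lambda>x. 1 - exp (- Lam n lam x))"
  proof
    fix x
    have "cdf (distr M borel (min_rv n X)) x = 1 - (\<Prod>i<n. 1 - cdf (distr M borel (X i)) x)"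
      using X_indep X_rv n_pos by (intro PM.cdf_min) auto
    also have "(\<Prod>i<n. 1 - cdf (distr M borel (X i)) x) = (\<Prod>i<n. exp (- LG (lam i * x)))"
      using X_distr by (intro prod.cong) (auto simp: exp_LG)
    also have "\<dots> = exp (- Lam n lam x)"
      unfolding Lam_def by (simp add: exp_sum flip: sum_negf)
    finally show "cdf (distr M borel (min_rv n X)) x = 1 - exp (- Lam n lam x)" .
  qed
  have cdfXs: "cdf (distr N borel (min_rv n Xs)) = (\<lambda>x. 1 - exp (- Lam n lams x))"
  proof
    fix x
    have "cdf (distr N borel (min_rv n Xs)) x = 1 - (\<Prod>i<n. 1 - cdf (distr N borel (Xs i)) x)"
      using Xs_indep Xs_rv n_pos by (intro PN.cdf_min) auto
    also have "(\<Prod>i<n. 1 - cdf (distr N borel (Xs i)) x) = (\<Prod>i<n. exp (- LG (lams i * x)))"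
      using Xs_distr by (intro prod.cong) (auto simp: exp_LG)
    also have "\<dots> = exp (- Lam n lams x)"
      unfolding Lam_def by (simp add: exp_sum flip: sum_negf)
    finally show "cdf (distr N borel (min_rv n Xs)) x = 1 - exp (- Lam n lams x)" .
  qed
  define as where "as = sorted_vals n lam"
  define bs where "bs = sorted_vals n lams"
  have as_pos: "\<forall>i<n. 0 < as ! i" using sv_mem[where n=n and l=lam] lam_pos unfolding as_def by fastforce
  have bs_pos: "\<forall>i<n. 0 < bs ! i" using sv_mem[where n=n and l=lams] lams_pos unfolding bs_def by fastforce
  have HazX: "Haz n lam x = (\<Sum>i<n. hh (as ! i * x)) / x" if "x > 0" for x
    using Haz_hh[OF that, of n lam] sv_sum[where f="\<lambda>v. hh (v * x)" and n=n and l=lam] unfolding as_def by simp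
  have HazXs: "Haz n lams x = (\<Sum>i<n. hh (bs ! i * x)) / x" if "x > 0" for x
    using Haz_hh[OF that, of n lams] sv_sum[where f="\<lambda>v. hh (v * x)" and n=n and l=lams] unfolding bs_def by simp
  have partA: "Haz n lam x \<le> Haz n lams x"
    if k: "antimono_on {0<..} (\<lambda>x. x\<^sup>2 * r' x)"
      and pre: "\<forall>j\<in>{1..n}. sum_list (take j bs) \<ge> sum_list (take j as)"
      and x: "x > 0" for x
  proof -
    have "(\<Sum>i<n. hh (as ! i * x)) \<le> (\<Sum>i<n. hh (bs ! i * x))"
    proof (rule major_concave[OF _ _ _ hh_deriv hh'_nonneg hh'_anti[OF k]])
      show "\<forall>i<n. 0 < as ! i * x \<and> 0 < bs ! i * x" using as_pos bs_pos x by simp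
      show "\<forall>i j. i \<le> j \<longrightarrow> j < n \<longrightarrow> bs ! i * x \<le> bs ! j * x"
        using sv_sorted x unfolding bs_def by (simp add: mult_right_mono)
      show "\<forall>j\<le>n. (\<Sum>i<j. as ! i * x) \<le> (\<Sum>i<j. bs ! i * x)"
      proof (intro allI impI)
        fix j assume j: "j \<le> n"
        show "(\<Sum>i<j. as ! i * x) \<le> (\<Sum>i<j. bs ! i * x)"
        proof (cases "j = 0")
          case False
          then have "j \<in> {1..n}" using j by simp
          then have "sum_list (take j as) \<le> sum_list (take j bs)" using pre by blast
          then have "(\<Sum>i<j. as ! i) \<le> (\<Sum>i<j. bs ! i)"
            using sv_take[OF j] unfolding as_def bs_def by metis
          then show ?thesis using x by (simp flip: sum_distrib_right add: mult_right_mono)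
        qed simp
      qed
    qed
    then show ?thesis using HazX[OF x] HazXs[OF x] x by (simp add: divide_right_mono)
  qed
  have partB: "Haz n lams x \<le> Haz n lam x"
    if k: "mono_on {0<..} (\<lambda>x. x\<^sup>2 * r' x)"
      and suf: "\<forall>j\<in>{1..n}. sum_list (drop (j - 1) bs) \<le> sum_list (drop (j - 1) as)"
      and x: "x > 0" for x
  proof -
    have "(\<Sum>i<n. hh (bs ! i * x)) \<le> (\<Sum>i<n. hh (as ! i * x))"
    proof (rule major_convex[OF _ _ _ hh_deriv hh'_nonneg hh'_mono[OF k]])
      show "\<forall>i<n. 0 < as ! i * x \<and> 0 < bs ! i * x" using as_pos bs_pos x by simp
      show "\<forall>i j. i \<le> j \<longrightarrow> j < n \<longrightarrow> bs ! i * x \<le> bs ! j * x"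
        using sv_sorted x unfolding bs_def by (simp add: mult_right_mono)
      show "\<forall>j<n. (\<Sum>i\<in>{j..<n}. bs ! i * x) \<le> (\<Sum>i\<in>{j..<n}. as ! i * x)"
      proof (intro allI impI)
        fix j assume j: "j < n"
        have "Suc j \<in> {1..n}" using j by simp
        then have "(\<Sum>i\<in>{j..<n}. bs ! i) \<le> (\<Sum>i\<in>{j..<n}. as ! i)"
          using suf sv_drop[where k=j and n=n] j unfolding as_def bs_def by fastforce
        then show "(\<Sum>i\<in>{j..<n}. bs ! i * x) \<le> (\<Sum>i\<in>{j..<n}. as ! i * x)"
          using x by (simp flip: sum_distrib_right add: mult_right_mono)
      qed
    qed
    then show ?thesis using HazX[OF x] HazXs[OF x] x by (simp add: divide_right_mono)
  qed
  show ?thesis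
  proof (intro conjI impI)
    assume h: "antimono_on {0<..} (\<lambda>x. x\<^sup>2 * r' x) \<and>
       (\<forall>j\<in>{1..n}. sum_list (take j (sorted_vals n lams)) \<ge> sum_list (take j (sorted_vals n lam)))"
    then have le: "\<forall>x>0. Haz n lam x \<le> Haz n lams x" using partA unfolding as_def bs_def by blast
    show "hr_le (distr N borel (min_rv n Xs)) (distr M borel (min_rv n X))"
      unfolding hr_le_def cdfX cdfXs using le hazard_Lam lam_pos lams_pos by simp
    assume ar: "antimono_on {0<..} r"
    show "disp_le (distr N borel (min_rv n Xs)) (distr M borel (min_rv n X))"
      unfolding disp_le_def cdfX cdfXs
      using disp_from_haz[OF n_pos lams_pos lam_pos le ar] by blast
  next
    assume h: "mono_on {0<..} (\<lambda>x. x\<^sup>2 * r' x) \<and>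
       (\<forall>j\<in>{1..n}. sum_list (drop (j - 1) (sorted_vals n lams)) \<le> sum_list (drop (j - 1) (sorted_vals n lam)))"
    then have le: "\<forall>x>0. Haz n lams x \<le> Haz n lam x" using partB unfolding as_def bs_def by blast
    show "hr_le (distr M borel (min_rv n X)) (distr N borel (min_rv n Xs))"
      unfolding hr_le_def cdfX cdfXs using le hazard_Lam lam_pos lams_pos by simp
    assume ar: "antimono_on {0<..} r"
    show "disp_le (distr M borel (min_rv n X)) (distr N borel (min_rv n Xs))"
      unfolding disp_le_def cdfX cdfXs
      using disp_from_haz[OF n_pos lam_pos lams_pos le ar] by blast
  qed
qed


end
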